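(* Let $\tau_1,\tau_2\in\mathcal{T}$ be such that $(\mathbb{R},\tau_1)$ and $(\mathbb{R},\tau_2)$ are locally connected. (a) If $(\mathbb{R},\tau_1)$ is separable and $(\mathbb{R},\tau_2)$ is not discrete, then $(\mathbb{R},\tau_1)$ is homeomorphic to a subspace of $(\mathbb{R},\tau_2)$. (b) If $(\mathbb{R},\tau_2)$ is neither separable nor discrete, then $(\mathbb{R},\tau_1)$ is homeomorphic to a subspace of $(\mathbb{R},\tau_2)$.
   Context: $\eta$ denotes the Euclidean topology on $\mathbb{R}$; $\mathcal{T}$ is the family of all topologies on $\mathbb{R}$ finer than $\eta$. *)

theory Defs
  imports "HOL-Analysis.Analysis"
begin

definition finer_than_euclidean :: "real topology set" where
  "finer_than_euclidean = {\<tau>. topspace \<tau> = UNIV \<and> (\<forall>U. openin euclideanreal U \<longrightarrow> openin \<tau> U)}"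

end

theory Submission
  imports Defs
begin

lemma fin_top: "\<tau> \<in> finer_than_euclidean \<Longrightarrow> topspace \<tau> = UNIV"
  by (simp add: finer_than_euclidean_def)

lemma fin_open: "\<tau> \<in> finer_than_euclidean \<Longrightarrow> open U \<Longrightarrow> openin \<tau> U"
  by (simp add: finer_than_euclidean_def)

lemma fin_cont: "\<tau> \<in> finer_than_euclidean \<Longrightarrow> continuous_map \<tau> euclideanreal id"
  unfolding continuous_map_def by (simp add: fin_top fin_open)

lemma fin_connected: "\<tau> \<in> finer_than_euclidean \<Longrightarrow> connectedin \<tau> S \<Longrightarrow> connected S"
  using connectedin_continuous_map_image[OF fin_cont] by fastforce

lemma comp_right:
  fixes \<tau> :: "real topology"
  assumes fin: "\<tau> \<in> finer_than_euclidean"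
    and C: "connectedin \<tau> C" and W: "openin \<tau> W" "connected W" "y \<in> W" "W \<subseteq> C"
  shows "\<exists>e>0. \<forall>c\<in>C. y < c \<and> c < y + e \<longrightarrow> c \<in> W"
proof (cases "\<exists>c0\<in>C. y < c0")
  case False
  then show ?thesis by (metis zero_less_one)
next
  case True
  then obtain c0 where c0: "c0 \<in> C" "y < c0" by blast
  show ?thesis
  proof (cases "\<exists>w\<in>W. y < w")
    case True
    then obtain w where w: "w \<in> W" "y < w" by blast
    have "c \<in> W" if "y < c" "c < y + (w - y)" for c
      using W(2) W(3) w(1) that connected_iff_interval[of W] by fastforce
    then show ?thesis using w by (metis diff_gt_0_iff_gt)
  next
    case False
    let ?E1 = "{y<..}" and ?E2 = "W \<union> {..<y}"
    have o1: "openin \<tau> ?E1" by (rule fin_open[OF fin]) simp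
    have o2: "openin \<tau> ?E2" using W(1) fin_open[OF fin, of "{..<y}"] by auto
    have "C \<subseteq> ?E1 \<union> ?E2"
    proof
      fix c assume "c \<in> C" then show "c \<in> ?E1 \<union> ?E2" using W(3) by (cases "c = y") auto
    qed
    moreover have "?E1 \<inter> ?E2 \<inter> C = {}" using False by auto
    moreover have "?E1 \<inter> C \<noteq> {}" using c0 by auto
    moreover have "?E2 \<inter> C \<noteq> {}" using W by auto
    ultimately show ?thesis using C o1 o2 unfolding connectedin by blast
  qed
qed

lemma comp_left:
  fixes \<tau> :: "real topology"
  assumes fin: "\<tau> \<in> finer_than_euclidean"
    and C: "connectedin \<tau> C" and W: "openin \<tau> W" "connected W" "y \<in> W" "W \<subseteq> C"
  shows "\<exists>e>0. \<forall>c\<in>C. y - e < c \<and> c < y \<longrightarrow> c \<in> W"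
proof (cases "\<exists>c0\<in>C. c0 < y")
  case False
  then show ?thesis by (metis zero_less_one)
next
  case True
  then obtain c0 where c0: "c0 \<in> C" "c0 < y" by blast
  show ?thesis
  proof (cases "\<exists>w\<in>W. w < y")
    case True
    then obtain w where w: "w \<in> W" "w < y" by blast
    have "c \<in> W" if "y - (y - w) < c" "c < y" for c
      using W(2) W(3) w(1) that connected_iff_interval[of W] by fastforce
    then show ?thesis using w by (metis diff_gt_0_iff_gt)
  next
    case False
    let ?E1 = "{..<y}" and ?E2 = "W \<union> {y<..}"
    have o1: "openin \<tau> ?E1" by (rule fin_open[OF fin]) simp
    have o2: "openin \<tau> ?E2" using W(1) fin_open[OF fin, of "{y<..}"] by auto
    have "C \<subseteq> ?E1 \<union> ?E2"
    proof
      fix c assume "c \<in> C" then show "c \<in> ?E1 \<union> ?E2" using W(3) by (cases "c = y") auto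
    qed
    moreover have "?E1 \<inter> ?E2 \<inter> C = {}" using False by auto
    moreover have "?E1 \<inter> C \<noteq> {}" using c0 by auto
    moreover have "?E2 \<inter> C \<noteq> {}" using W by auto
    ultimately show ?thesis using C o1 o2 unfolding connectedin by blast
  qed
qed

lemma comp_subtop:
  fixes \<tau> :: "real topology" and x :: real
  assumes fin: "\<tau> \<in> finer_than_euclidean" and lc: "locally_connected_space \<tau>"
  defines "C \<equiv> connected_component_of_set \<tau> x"
  shows "subtopology \<tau> C = subtopology euclideanreal C"
proof (rule topology_eq[THEN iffD2], intro allI iffI)
  have Co: "openin \<tau> C" unfolding C_def by (rule openin_connected_component_of_locally_connected_space[OF lc])
  have Cc: "connectedin \<tau> C" unfolding C_def by (rule connectedin_connected_component_of)
  fix U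
  assume "openin (subtopology euclideanreal C) U"
  then obtain T where "open T" "U = T \<inter> C" by (auto simp: openin_subtopology)
  then show "openin (subtopology \<tau> C) U" using fin_open[OF fin] by (auto simp: openin_subtopology)
next
  have Co: "openin \<tau> C" unfolding C_def by (rule openin_connected_component_of_locally_connected_space[OF lc])
  have Cc: "connectedin \<tau> C" unfolding C_def by (rule connectedin_connected_component_of)
  fix U
  assume "openin (subtopology \<tau> C) U"
  then have Uo: "openin \<tau> U" and UC: "U \<subseteq> C"
    using Co openin_open_subtopology openin_subset by (force, fastforce)
  show "openin (subtopology euclideanreal C) U"
    unfolding openin_euclidean_subtopology_iff
  proof (intro conjI ballI)
    show "U \<subseteq> C" by fact
    fix y assume y: "y \<in> U"
    then obtain W where W: "openin \<tau> W" "connectedin \<tau> W" "y \<in> W" "W \<subseteq> U"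
      using lc Uo unfolding locally_connected_space by metis
    have Wc: "connected W" using fin_connected[OF fin W(2)] .
    obtain e1 where e1: "e1 > 0" "\<forall>c\<in>C. y < c \<and> c < y + e1 \<longrightarrow> c \<in> W"
      using comp_right[OF fin Cc W(1) Wc W(3)] W(4) UC by auto
    obtain e2 where e2: "e2 > 0" "\<forall>c\<in>C. y - e2 < c \<and> c < y \<longrightarrow> c \<in> W"
      using comp_left[OF fin Cc W(1) Wc W(3)] W(4) UC by auto
    show "\<exists>e>0. \<forall>x'\<in>C. dist x' y < e \<longrightarrow> x' \<in> U"
    proof (intro exI[of _ "min e1 e2"] conjI ballI impI)
      show "min e1 e2 > 0" using e1 e2 by simp
      fix c assume c: "c \<in> C" "dist c y < min e1 e2"
      consider "c = y" | "y < c" | "c < y" by linarith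
      then show "c \<in> U"
      proof cases
        case 1 then show ?thesis using y by simp
      next
        case 2 then show ?thesis using e1 c W(4) by (auto simp: dist_real_def)
      next
        case 3 then show ?thesis using e2 c W(4) by (auto simp: dist_real_def)
      qed
    qed
  qed
qed



lemma glue:
  assumes cover: "topspace X = \<Union>\<C>"
    and Co: "\<And>C. C \<in> \<C> \<Longrightarrow> openin X C"
    and Do: "\<And>C. C \<in> \<C> \<Longrightarrow> openin Y (D C)"
    and Dd: "\<And>C C'. C \<in> \<C> \<Longrightarrow> C' \<in> \<C> \<Longrightarrow> C \<noteq> C' \<Longrightarrow> D C \<inter> D C' = {}"
    and fD: "\<And>C. C \<in> \<C> \<Longrightarrow> f ` C \<subseteq> D C"
    and H: "\<And>C. C \<in> \<C> \<Longrightarrow> homeomorphic_map (subtopology X C) (subtopology Y (f ` C)) f"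
  shows "homeomorphic_map X (subtopology Y (f ` topspace X)) f"
proof (rule bijective_open_imp_homeomorphic_map)
  have CX: "C \<subseteq> topspace X" if "C \<in> \<C>" for C using cover that by auto
  have same: "x \<in> C" if hC: "C \<in> \<C>" and hx: "x \<in> topspace X" and hf: "f x \<in> D C" for C x
  proof -
    obtain C' where C': "C' \<in> \<C>" "x \<in> C'" using cover hx by auto
    show ?thesis
    proof (cases "C = C'")
      case False
      then have "D C \<inter> D C' = {}" using Dd hC C'(1) by blast
      moreover have "f x \<in> D C'" using fD C' by blast
      ultimately show ?thesis using hf by blast
    qed (use C' in auto)
  qed
  show "continuous_map X (subtopology Y (f ` topspace X)) f"
    unfolding continuous_map_in_subtopology
  proof
    show "continuous_map X Y f"
    proof (rule pasting_lemma[where I=\<C> and T="\<lambda>C. C" and f="\<lambda>_. f"])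
      fix C assume "C \<in> \<C>"
      then show "continuous_map (subtopology X C) Y f"
        using H[of C] homeomorphic_imp_continuous_map continuous_map_in_subtopology by blast
    qed (use Co cover in auto)
  qed auto
  show "open_map X (subtopology Y (f ` topspace X)) f"
    unfolding open_map_def
  proof (intro allI impI)
    fix U assume U: "openin X U"
    have "f ` U = (\<Union>C\<in>\<C>. f ` (U \<inter> C))" using cover openin_subset[OF U] by blast
    moreover have "openin (subtopology Y (f ` topspace X)) (f ` (U \<inter> C))" if C: "C \<in> \<C>" for C
    proof -
      have "openin (subtopology X C) (U \<inter> C)" using U by (auto simp: openin_subtopology)
      then have "openin (subtopology Y (f ` C)) (f ` (U \<inter> C))"
        using homeomorphic_map_openness[OF H[OF C], of "U \<inter> C"] CX[OF C] by auto
      then obtain V where V: "openin Y V" "f ` (U \<inter> C) = V \<inter> f ` C"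
        by (auto simp: openin_subtopology)
      have "f ` (U \<inter> C) = (V \<inter> D C) \<inter> f ` topspace X"
      proof
        show "f ` (U \<inter> C) \<subseteq> V \<inter> D C \<inter> f ` topspace X"
          using V(2) fD[OF C] CX[OF C] by auto
        show "V \<inter> D C \<inter> f ` topspace X \<subseteq> f ` (U \<inter> C)"
          using V(2) same[OF C] by auto
      qed
      then show ?thesis using V(1) Do[OF C] by (auto simp: openin_subtopology)
    qed
    ultimately show "openin (subtopology Y (f ` topspace X)) (f ` U)" by (auto intro: openin_Union)
  qed
  show "f ` topspace X = topspace (subtopology Y (f ` topspace X))"
  proof -
    have "f ` topspace X \<subseteq> topspace Y"
      using cover fD Do openin_subset by fastforce
    then show ?thesis by auto
  qed
  show "inj_on f (topspace X)"
  proof (rule inj_onI)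
    fix x y assume xy: "x \<in> topspace X" "y \<in> topspace X" "f x = f y"
    obtain C where C: "C \<in> \<C>" "x \<in> C" using cover xy(1) by auto
    have "y \<in> C" using same[OF C(1) xy(2)] fD[OF C(1)] C(2) xy(3) by (metis image_subset_iff)
    moreover have "inj_on f C"
      using H[OF C(1)] CX[OF C(1)] unfolding homeomorphic_map_def by (simp add: Int_absorb1)
    ultimately show "x = y" using C xy(3) by (meson inj_onD)
  qed
qed



definition sq :: "real \<Rightarrow> real" where "sq t = t / (1 + \<bar>t\<bar>)"
definition usq :: "real \<Rightarrow> real" where "usq s = s / (1 - \<bar>s\<bar>)"
lemma sq_den: "1 + \<bar>t::real\<bar> \<noteq> 0" by arith

lemma sq_abs: "\<bar>sq t\<bar> = \<bar>t\<bar> / (1 + \<bar>t\<bar>)"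
  unfolding sq_def abs_divide by simp

lemma sq_bound: "\<bar>sq t\<bar> < 1"
  unfolding sq_abs by simp

lemma usq_sq: "usq (sq t) = t"
proof -
  have d: "1 + \<bar>t\<bar> > 0" by arith
  have "1 - \<bar>sq t\<bar> = 1 / (1 + \<bar>t\<bar>)" unfolding sq_abs using d by (simp add: divide_simps)
  then have "usq (sq t) = (t / (1 + \<bar>t\<bar>)) / (1 / (1 + \<bar>t\<bar>))" unfolding usq_def sq_def by simp
  also have "\<dots> = t" using d by simp
  finally show ?thesis .
qed

lemma sq_usq: 
  assumes s: "\<bar>s\<bar> < 1" shows "sq (usq s) = s"
proof -
  have d: "1 - \<bar>s\<bar> > 0" using s by arith
  have a: "\<bar>usq s\<bar> = \<bar>s\<bar> / (1 - \<bar>s\<bar>)" unfolding usq_def abs_divide using d by simp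
  have "1 + \<bar>usq s\<bar> = 1 / (1 - \<bar>s\<bar>)" unfolding a using d by (simp add: divide_simps)
  then have "sq (usq s) = (s / (1 - \<bar>s\<bar>)) / (1 / (1 - \<bar>s\<bar>))" unfolding usq_def sq_def
    by (metis usq_def)
  also have "\<dots> = s" using d by simp
  finally show ?thesis .
qed

lemma cont_sq: "continuous_on S sq"
  unfolding sq_def by (intro continuous_intros) (simp add: sq_den)

lemma cont_usq: "S \<subseteq> {s. \<bar>s\<bar> < 1} \<Longrightarrow> continuous_on S usq"
  unfolding usq_def by (intro continuous_intros) auto

definition emb :: "real \<Rightarrow> real \<Rightarrow> real \<Rightarrow> real"
  where "emb lo hi t = lo + (hi - lo) * ((1 + sq t) / 2)"

lemma emb_range: 
  assumes "lo < hi" shows "emb lo hi t \<in> {lo<..<hi}"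
proof -
  have "0 < (1 + sq t) / 2" "(1 + sq t) / 2 < 1" using sq_bound[of t] by auto
  moreover have "0 < hi - lo" using assms by simp
  ultimately have "0 < (hi - lo) * ((1 + sq t) / 2)" "(hi - lo) * ((1 + sq t) / 2) < (hi - lo) * 1"
    by (simp add: mult_pos_pos, intro mult_strict_left_mono) auto
  then show ?thesis unfolding emb_def by auto
qed

lemma emb_hom:
  assumes "lo < hi"
  shows "homeomorphic_map euclideanreal (subtopology euclideanreal {lo<..<hi}) (emb lo hi)"
  unfolding homeomorphic_map_maps
proof (intro exI[of _ "\<lambda>y. usq (2 * (y - lo) / (hi - lo) - 1)"])
  let ?g = "\<lambda>y. usq (2 * (y - lo) / (hi - lo) - 1)"
  have d: "hi - lo \<noteq> 0" using assms by simp
  have c1: "continuous_map euclideanreal (subtopology euclideanreal {lo<..<hi}) (emb lo hi)"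
    unfolding continuous_map_in_subtopology using emb_range[OF assms]
    by (auto simp: emb_def intro!: continuous_intros cont_sq[THEN continuous_on_compose2])
  have b: "\<bar>2 * (y - lo) / (hi - lo) - 1\<bar> < 1" if "y \<in> {lo<..<hi}" for y
    using that assms by (auto simp: abs_less_iff field_simps)
  have c2: "continuous_map (subtopology euclideanreal {lo<..<hi}) euclideanreal ?g"
  proof -
    have "continuous_on {lo<..<hi} (\<lambda>y. 2 * (y - lo) / (hi - lo) - 1)"
      using d by (intro continuous_intros) auto
    moreover have "(\<lambda>y. 2 * (y - lo) / (hi - lo) - 1) ` {lo<..<hi} \<subseteq> {s. \<bar>s\<bar> < 1}"
      using b by auto
    ultimately have "continuous_on {lo<..<hi} ?g"
      by (rule continuous_on_compose2[OF cont_usq[OF order_refl]])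
    then show ?thesis by simp
  qed
  have i1: "\<forall>x\<in>topspace euclideanreal. ?g (emb lo hi x) = x"
  proof
    fix x :: real
    have "2 * (emb lo hi x - lo) / (hi - lo) - 1 = sq x" unfolding emb_def using d by (simp add: field_simps)
    then show "?g (emb lo hi x) = x" by (simp add: usq_sq)
  qed
  have i2: "\<forall>y\<in>topspace (subtopology euclideanreal {lo<..<hi}). emb lo hi (?g y) = y"
  proof
    fix y assume "y \<in> topspace (subtopology euclideanreal {lo<..<hi})"
    then have "y \<in> {lo<..<hi}" by simp
    then have "sq (?g y) = 2 * (y - lo) / (hi - lo) - 1" using sq_usq b by blast
    then show "emb lo hi (?g y) = y" unfolding emb_def using d by (simp add: field_simps)
  qed
  show "homeomorphic_maps euclideanreal (subtopology euclideanreal {lo<..<hi}) (emb lo hi) ?g"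
    unfolding homeomorphic_maps_def using c1 c2 i1 i2 by blast
qed

lemma emb_hom_sub:
  assumes "lo < hi"
  shows "homeomorphic_map (subtopology euclideanreal C) (subtopology euclideanreal (emb lo hi ` C)) (emb lo hi)"
proof -
  have "homeomorphic_map (subtopology euclideanreal C) (subtopology (subtopology euclideanreal {lo<..<hi}) (emb lo hi ` C)) (emb lo hi)"
    by (rule homeomorphic_map_subtopologies[OF emb_hom[OF assms]]) (use emb_range[OF assms] in auto)
  moreover have "{lo<..<hi} \<inter> emb lo hi ` C = emb lo hi ` C" using emb_range[OF assms] by auto
  ultimately show ?thesis by (simp add: subtopology_subtopology)
qed



lemma natsets_pair_lepoll: "(UNIV::nat set set) \<times> (UNIV::nat set set) \<lesssim> (UNIV::nat set set)"
proof -
  define h where "h = (\<lambda>(A::nat set, B::nat set). (\<lambda>n. 2*n) ` A \<union> (\<lambda>n. 2*n+1) ` B)"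
  have ev: "{n. 2*n \<in> h (A, B)} = A" for A B
  proof -
    have "2*n \<noteq> 2*m+1" for n m :: nat by presburger
    then show ?thesis unfolding h_def by auto
  qed
  have od: "{n. 2*n+1 \<in> h (A, B)} = B" for A B
  proof -
    have "2*n+1 \<noteq> 2*m" for n m :: nat by presburger
    then show ?thesis unfolding h_def by auto
  qed
  have "inj h"
  proof (rule injI)
    fix p q :: "nat set \<times> nat set"
    assume eq: "h p = h q"
    obtain A B where p: "p = (A, B)" by fastforce
    obtain A' B' where q: "q = (A', B')" by fastforce
    have "A = A'" using ev[of A B] ev[of A' B'] eq p q by simp
    moreover have "B = B'" using od[of A B] od[of A' B'] eq p q by simp
    ultimately show "p = q" using p q by simp
  qed
  then show ?thesis unfolding lepoll_def UNIV_Times_UNIV by blast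
qed

lemma real_pair_lepoll: "(UNIV::real set) \<times> (UNIV::real set) \<lesssim> (UNIV::real set)"
proof -
  have "(UNIV::real set) \<times> (UNIV::real set) \<approx> (UNIV::nat set set) \<times> (UNIV::nat set set)"
    by (rule times_eqpoll_cong[OF eqpoll_sym[OF nat_sets_eqpoll_reals] eqpoll_sym[OF nat_sets_eqpoll_reals]])
  also have "\<dots> \<lesssim> (UNIV::nat set set)" by (rule natsets_pair_lepoll)
  also have "\<dots> \<approx> (UNIV::real set)" by (rule nat_sets_eqpoll_reals)
  finally show ?thesis .
qed

lemma lepoll_diff_countable:
  fixes P :: "'a set"
  assumes "(UNIV::real set) \<lesssim> P" and K: "countable K"
  shows "(UNIV::real set) \<lesssim> P - K"
proof -
  have "(UNIV::real set) \<times> (UNIV::real set) \<lesssim> P"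
    by (rule lepoll_trans[OF real_pair_lepoll assms(1)])
  then obtain \<phi> where \<phi>: "inj_on \<phi> ((UNIV::real set) \<times> (UNIV::real set))" "\<phi> ` (UNIV \<times> UNIV) \<subseteq> P"
    unfolding lepoll_def by blast
  have ne: "\<exists>y. y \<in> \<phi> ` ({x} \<times> UNIV) - K" for x
  proof (rule ccontr)
    assume "\<not> (\<exists>y. y \<in> \<phi> ` ({x} \<times> UNIV) - K)"
    then have "\<phi> ` ({x} \<times> UNIV) \<subseteq> K" by blast
    then have "countable (\<phi> ` ({x} \<times> (UNIV::real set)))" by (rule countable_subset) (rule K)
    then have c: "countable ({x} \<times> (UNIV::real set))"
      by (rule countable_image_inj_on[OF _ inj_on_subset[OF \<phi>(1)]]) simp
    have "UNIV = snd ` ({x} \<times> (UNIV::real set))" by simp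
    also have "countable \<dots>" using c by (rule countable_image)
    finally show False using uncountable_UNIV_real by simp
  qed
  define \<psi> where "\<psi> x = (SOME y. y \<in> \<phi> ` ({x} \<times> UNIV) - K)" for x
  have \<psi>: "\<psi> x \<in> \<phi> ` ({x} \<times> UNIV) - K" for x
    unfolding \<psi>_def by (rule someI_ex) (rule ne)
  have "inj \<psi>"
  proof (rule injI)
    fix x x' assume eq: "\<psi> x = \<psi> x'"
    obtain a where a: "\<psi> x = \<phi> (x, a)" using \<psi>[of x] by blast
    obtain a' where a': "\<psi> x' = \<phi> (x', a')" using \<psi>[of x'] by blast
    have "(x, a) = (x', a')" by (rule inj_onD[OF \<phi>(1)]) (use eq a a' in simp_all)
    then show "x = x'" by simp
  qed
  moreover have "range \<psi> \<subseteq> P - K"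
  proof
    fix y assume "y \<in> range \<psi>"
    then obtain x where "y = \<psi> x" by blast
    then show "y \<in> P - K" using \<psi>[of x] \<phi>(2) by blast
  qed
  ultimately show ?thesis unfolding lepoll_def by blast
qed

definition condpts :: "real set \<Rightarrow> real set"
  where "condpts T = {x. \<forall>e>0. uncountable (ball x e \<inter> T)}"

lemma countable_diff_condpts: "countable (T - condpts T)"
proof -
  let ?R = "{(q1, q2). q1 \<in> \<rat> \<and> q2 \<in> \<rat> \<and> countable ({q1<..<q2} \<inter> T)}"
  have cR: "countable ?R"
  proof (rule countable_subset)
    show "?R \<subseteq> \<rat> \<times> \<rat>" by auto
    show "countable (\<rat> \<times> (\<rat>::real set))" by (rule countable_SIGMA) (rule countable_rat)+
  qed
  have "T - condpts T \<subseteq> (\<Union>(q1, q2)\<in>?R. {q1<..<q2} \<inter> T)"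
  proof
    fix x assume x: "x \<in> T - condpts T"
    then obtain e where e: "e > 0" "countable (ball x e \<inter> T)" unfolding condpts_def by auto
    obtain q1 where q1: "q1 \<in> \<rat>" "x - e < q1" "q1 < x" using Rats_dense_in_real[of "x - e" x] e(1) by auto
    obtain q2 where q2: "q2 \<in> \<rat>" "x < q2" "q2 < x + e" using Rats_dense_in_real[of x "x + e"] e(1) by auto
    have "{q1<..<q2} \<subseteq> ball x e" using q1 q2 by (auto simp: dist_real_def)
    then have "countable ({q1<..<q2} \<inter> T)" by (intro countable_subset[OF _ e(2)]) blast
    then show "x \<in> (\<Union>(q1, q2)\<in>?R. {q1<..<q2} \<inter> T)"
      by (intro UN_I[of "(q1, q2)"]) (use q1 q2 x in auto)
  qed
  moreover have "countable (\<Union>(q1, q2)\<in>?R. {q1<..<q2} \<inter> T)"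
    by (rule countable_UN[OF cR]) auto
  ultimately show ?thesis by (rule countable_subset)
qed

lemma condpts_perfect: "euclideanreal derived_set_of (condpts T) = condpts T"
proof (intro set_eqI iffI)
  fix x assume x: "x \<in> euclideanreal derived_set_of (condpts T)"
  show "x \<in> condpts T" unfolding condpts_def
  proof (intro CollectI allI impI)
    fix e :: real assume e: "e > 0"
    have "x \<in> ball x e \<and> openin euclideanreal (ball x e)" using e by simp
    then obtain y where y: "y \<in> condpts T" "y \<in> ball x e"
      using x unfolding derived_set_of_def by blast
    define d where "d = e - dist x y"
    have d: "d > 0" using y(2) by (simp add: d_def)
    have "ball y d \<subseteq> ball x e"
    proof
      fix z assume "z \<in> ball y d"
      then have "dist y z < d" by simp
      then have "dist x z < e" using dist_triangle[of x z y] unfolding d_def by linarith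
      then show "z \<in> ball x e" by simp
    qed
    then have "ball y d \<inter> T \<subseteq> ball x e \<inter> T" by blast
    moreover have "uncountable (ball y d \<inter> T)" using y(1) d unfolding condpts_def by blast
    ultimately show "uncountable (ball x e \<inter> T)" using countable_subset by metis
  qed
next
  fix x assume x: "x \<in> condpts T"
  show "x \<in> euclideanreal derived_set_of (condpts T)" unfolding derived_set_of_def
  proof (intro CollectI conjI allI impI)
    show "x \<in> topspace euclideanreal" by simp
    fix U assume U: "x \<in> U \<and> openin euclideanreal U"
    then have "open U" by simp
    then obtain e where e: "e > 0" "ball x e \<subseteq> U" using U open_contains_ball by blast
    have "uncountable (ball x e \<inter> T)" using x e(1) unfolding condpts_def by blast
    then have u1: "uncountable ((ball x e \<inter> T) - (T - condpts T))"
      by (rule uncountable_minus_countable) (rule countable_diff_condpts)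
    have "\<not> ((ball x e \<inter> T) - (T - condpts T) \<subseteq> {x})"
    proof
      assume "(ball x e \<inter> T) - (T - condpts T) \<subseteq> {x}"
      then have "countable ((ball x e \<inter> T) - (T - condpts T))" by (rule countable_subset) simp
      then show False using u1 by simp
    qed
    then obtain y where "y \<in> (ball x e \<inter> T) - (T - condpts T) - {x}" by blast
    then show "\<exists>y. y \<noteq> x \<and> y \<in> condpts T \<and> y \<in> U" using e(2) by blast
  qed
qed

lemma uncountable_lepoll:
  fixes T :: "real set"
  assumes "uncountable T"
  shows "(UNIV::real set) \<lesssim> condpts T"
proof (rule lepoll_perfect_set)
  show "completely_metrizable_space euclideanreal \<or> locally_compact_space euclideanreal \<and> Hausdorff_space euclideanreal"
    using completely_metrizable_space_euclidean by blast
  show "euclideanreal derived_set_of condpts T = condpts T" by (rule condpts_perfect)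
  show "condpts T \<noteq> {}"
  proof
    assume "condpts T = {}"
    then show False using countable_diff_condpts[of T] assms by simp
  qed
qed




abbreviation ccomp :: "real topology \<Rightarrow> real \<Rightarrow> real set" where
  "ccomp \<tau> x \<equiv> connected_component_of_set \<tau> x"

lemma comp_open: "locally_connected_space \<tau> \<Longrightarrow> openin \<tau> (ccomp \<tau> x)"
  by (rule openin_connected_component_of_locally_connected_space)

lemma comp_self: "\<tau> \<in> finer_than_euclidean \<Longrightarrow> x \<in> ccomp \<tau> x"
  by (simp add: connected_component_of_refl fin_top)

lemma comp_conn: "\<tau> \<in> finer_than_euclidean \<Longrightarrow> connected (ccomp \<tau> x)"
  by (rule fin_connected[OF _ connectedin_connected_component_of])

lemma comp_same: "y \<in> ccomp \<tau> x \<Longrightarrow> ccomp \<tau> y = ccomp \<tau> x"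
  by (simp add: connected_component_of_equiv)

lemma comp_iso:
  assumes fin: "\<tau> \<in> finer_than_euclidean" and y: "openin \<tau> {y}"
  shows "ccomp \<tau> y = {y}"
proof (rule ccontr)
  assume ne: "ccomp \<tau> y \<noteq> {y}"
  have yC: "y \<in> ccomp \<tau> y" by (rule comp_self[OF fin])
  then obtain c where c: "c \<in> ccomp \<tau> y" "c \<noteq> y" using ne by blast
  have o2: "openin \<tau> (- {y})" by (rule fin_open[OF fin]) auto
  have "connectedin \<tau> (ccomp \<tau> y)" by (rule connectedin_connected_component_of)
  moreover have "ccomp \<tau> y \<subseteq> {y} \<union> - {y}" by blast
  moreover have "{y} \<inter> - {y} \<inter> ccomp \<tau> y = {}" by blast
  moreover have "{y} \<inter> ccomp \<tau> y \<noteq> {}" using yC by blast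
  moreover have "- {y} \<inter> ccomp \<tau> y \<noteq> {}" using c by blast
  ultimately show False using y o2 unfolding connectedin by blast
qed

lemma comp_noniso:
  assumes lc: "locally_connected_space \<tau>" and fin: "\<tau> \<in> finer_than_euclidean"
    and x: "\<not> openin \<tau> {x}"
  shows "\<exists>c\<in>ccomp \<tau> x. c \<noteq> x"
proof (rule ccontr)
  assume "\<not> (\<exists>c\<in>ccomp \<tau> x. c \<noteq> x)"
  then have "ccomp \<tau> x = {x}" using comp_self[OF fin, of x] by blast
  then show False using comp_open[OF lc, of x] x by simp
qed

lemma comp_noniso_all:
  assumes fin: "\<tau> \<in> finer_than_euclidean" and x: "\<not> openin \<tau> {x}" and y: "y \<in> ccomp \<tau> x"
  shows "\<not> openin \<tau> {y}"
proof
  assume "openin \<tau> {y}"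
  then have "ccomp \<tau> y = {y}" by (rule comp_iso[OF fin])
  then have "ccomp \<tau> x = {y}" using comp_same[OF y] by simp
  then have "x = y" using comp_self[OF fin, of x] by simp
  then show False using x \<open>openin \<tau> {y}\<close> by simp
qed

lemma comp_between:
  assumes fin: "\<tau> \<in> finer_than_euclidean" and "u \<in> ccomp \<tau> x" "v \<in> ccomp \<tau> x" "u \<le> z" "z \<le> v"
  shows "z \<in> ccomp \<tau> x"
  using comp_conn[OF fin, of x] assms(2-) unfolding connected_iff_interval by blast

lemma comp_rat:
  assumes lc: "locally_connected_space \<tau>" and fin: "\<tau> \<in> finer_than_euclidean"
    and x: "\<not> openin \<tau> {x}"
  shows "\<exists>q\<in>\<rat>. ccomp \<tau> x = ccomp \<tau> q"
proof -
  obtain c where c: "c \<in> ccomp \<tau> x" "c \<noteq> x" using comp_noniso[OF lc fin x] by blast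
  have xC: "x \<in> ccomp \<tau> x" by (rule comp_self[OF fin])
  obtain q where q: "q \<in> \<rat>" "min x c < q" "q < max x c"
    using Rats_dense_in_real[of "min x c" "max x c"] c(2) by (metis max_def min_def less_le_not_le linorder_less_linear)
  have "q \<in> ccomp \<tau> x"
  proof (cases "x < c")
    case True then show ?thesis using comp_between[OF fin xC c(1), of q] q by simp
  next
    case False then show ?thesis using comp_between[OF fin c(1) xC, of q] q by simp
  qed
  then show ?thesis using q(1) comp_same by metis
qed

lemma countable_noniso_comps:
  assumes lc: "locally_connected_space \<tau>" and fin: "\<tau> \<in> finer_than_euclidean"
  shows "countable {ccomp \<tau> x | x. \<not> openin \<tau> {x}}"
proof (rule countable_subset)
  show "{ccomp \<tau> x | x. \<not> openin \<tau> {x}} \<subseteq> ccomp \<tau> ` \<rat>"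
    using comp_rat[OF lc fin] by blast
  show "countable (ccomp \<tau> ` \<rat>)" by (rule countable_image) (rule countable_rat)
qed

lemma countable_comps_sep:
  assumes lc: "locally_connected_space \<tau>" and fin: "\<tau> \<in> finer_than_euclidean"
    and sep: "separable_space \<tau>"
  shows "countable {ccomp \<tau> x | x. True}"
proof -
  obtain D where D: "countable D" "\<tau> closure_of D = topspace \<tau>"
    using sep unfolding separable_space_def by blast
  show ?thesis
  proof (rule countable_subset)
    show "countable (ccomp \<tau> ` D)" by (rule countable_image) (rule D(1))
    show "{ccomp \<tau> x | x. True} \<subseteq> ccomp \<tau> ` D"
    proof clarify
      fix x
      have "D \<inter> ccomp \<tau> x \<noteq> {}"
        using D(2) comp_open[OF lc, of x] comp_self[OF fin, of x] unfolding dense_intersects_open by blast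
      then obtain d where "d \<in> D" "d \<in> ccomp \<tau> x" by blast
      then show "ccomp \<tau> x \<in> ccomp \<tau> ` D" using comp_same by (metis image_eqI)
    qed
  qed
qed


lemma subsingleton_countable: "(\<And>y y'. y \<in> S \<Longrightarrow> y' \<in> S \<Longrightarrow> y = y') \<Longrightarrow> countable S"
proof (cases "S = {}")
  case False
  assume h: "\<And>y y'. y \<in> S \<Longrightarrow> y' \<in> S \<Longrightarrow> y = y'"
  from False obtain y where "y \<in> S" by blast
  then have "S \<subseteq> {y}" using h by blast
  then show ?thesis by (rule countable_subset) simp
qed simp

lemma condpts_iso:
  assumes lc: "locally_connected_space \<tau>" and fin: "\<tau> \<in> finer_than_euclidean"
  shows "countable (condpts {x. openin \<tau> {x}} - {x. openin \<tau> {x}})"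
proof -
  let ?A = "{x. openin \<tau> {x}}"
  let ?E1 = "\<lambda>q. {y \<in> ccomp \<tau> q. \<forall>z\<in>ccomp \<tau> q. y \<le> z}"
  let ?E2 = "\<lambda>q. {y \<in> ccomp \<tau> q. \<forall>z\<in>ccomp \<tau> q. z \<le> y}"
  have "condpts ?A - ?A \<subseteq> (\<Union>q\<in>\<rat>. ?E1 q \<union> ?E2 q)"
  proof
    fix x assume x: "x \<in> condpts ?A - ?A"
    then have nx: "\<not> openin \<tau> {x}" by simp
    obtain q where q: "q \<in> \<rat>" "ccomp \<tau> x = ccomp \<tau> q" using comp_rat[OF lc fin nx] by blast
    have xC: "x \<in> ccomp \<tau> x" by (rule comp_self[OF fin])
    have "x \<in> ?E1 q \<union> ?E2 q"
    proof (rule ccontr)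
      assume "x \<notin> ?E1 q \<union> ?E2 q"
      then obtain z1 z2 where z: "z1 \<in> ccomp \<tau> x" "z1 < x" "z2 \<in> ccomp \<tau> x" "x < z2"
        using xC q(2) by (auto simp: not_le)
      define e where "e = min (x - z1) (z2 - x)"
      have e: "e > 0" using z by (simp add: e_def)
      have "ball x e \<inter> ?A = {}"
      proof (rule ccontr)
        assume "ball x e \<inter> ?A \<noteq> {}"
        then obtain y where y: "y \<in> ball x e" "openin \<tau> {y}" by blast
        have "z1 \<le> y" "y \<le> z2" using y(1) by (auto simp: e_def dist_real_def)
        then have "y \<in> ccomp \<tau> x" using comp_between[OF fin z(1) z(3)] by blast
        then show False using comp_noniso_all[OF fin nx] y(2) by blast
      qed
      then have "countable (ball x e \<inter> ?A)" by simp
      moreover have "uncountable (ball x e \<inter> ?A)" using x e unfolding condpts_def by blast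
      ultimately show False by blast
    qed
    then show "x \<in> (\<Union>q\<in>\<rat>. ?E1 q \<union> ?E2 q)" using q(1) by blast
  qed
  moreover have "countable (\<Union>q\<in>\<rat>. ?E1 q \<union> ?E2 q)"
  proof (rule countable_UN[OF countable_rat])
    fix q :: real
    have "countable (?E1 q)" by (rule subsingleton_countable) force
    moreover have "countable (?E2 q)" by (rule subsingleton_countable) force
    ultimately show "countable (?E1 q \<union> ?E2 q)" by (rule countable_Un)
  qed
  ultimately show ?thesis by (rule countable_subset)
qed

lemma iso_uncountable:
  assumes lc: "locally_connected_space \<tau>" and fin: "\<tau> \<in> finer_than_euclidean"
    and ns: "\<not> separable_space \<tau>"
  shows "uncountable {x. openin \<tau> {x}}"
proof
  let ?A = "{x. openin \<tau> {x}}"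
  assume cA: "countable ?A"
  have "separable_space \<tau>" unfolding separable_space_def
  proof (intro exI conjI)
    show "countable (?A \<union> \<rat>)" using cA countable_rat by (rule countable_Un)
    show "?A \<union> \<rat> \<subseteq> topspace \<tau>" by (simp add: fin_top[OF fin])
    show "\<tau> closure_of (?A \<union> \<rat>) = topspace \<tau>" unfolding dense_intersects_open
    proof (intro allI impI)
      fix U assume U: "openin \<tau> U \<and> U \<noteq> {}"
      then obtain x where x: "x \<in> U" by blast
      show "(?A \<union> \<rat>) \<inter> U \<noteq> {}"
      proof (cases "openin \<tau> {x}")
        case True then show ?thesis using x by blast
      next
        case False
        obtain c where c: "c \<in> ccomp \<tau> x" "c \<noteq> x" using comp_noniso[OF lc fin False] by blast
        have xC: "x \<in> ccomp \<tau> x" by (rule comp_self[OF fin])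
        have "openin (subtopology \<tau> (ccomp \<tau> x)) (U \<inter> ccomp \<tau> x)"
          using U by (simp add: openin_subtopology_Int)
        then have "openin (subtopology euclideanreal (ccomp \<tau> x)) (U \<inter> ccomp \<tau> x)"
          using comp_subtop[OF fin lc, of x] by simp
        then obtain e where e: "e > 0" "\<forall>y\<in>ccomp \<tau> x. dist y x < e \<longrightarrow> y \<in> U \<inter> ccomp \<tau> x"
          using xC x unfolding openin_euclidean_subtopology_iff by blast
        show ?thesis
        proof (cases "x < c")
          case True
          obtain q where q: "q \<in> \<rat>" "x < q" "q < min c (x + e)"
            using Rats_dense_in_real[of x "min c (x + e)"] True e(1) by auto
          have "q \<in> ccomp \<tau> x" using comp_between[OF fin xC c(1), of q] q by simp
          then have "q \<in> U" using e(2) q by (auto simp: dist_real_def)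
          then show ?thesis using q(1) by blast
        next
          case False
          then have cx: "c < x" using c(2) by simp
          obtain q where q: "q \<in> \<rat>" "max c (x - e) < q" "q < x"
            using Rats_dense_in_real[of "max c (x - e)" x] cx e(1) by auto
          have "q \<in> ccomp \<tau> x" using comp_between[OF fin c(1) xC, of q] q by simp
          then have "q \<in> U" using e(2) q by (auto simp: dist_real_def)
          then show ?thesis using q(1) by blast
        qed
      qed
    qed
  qed
  then show False using ns by simp
qed

lemma iso_inj:
  assumes lc: "locally_connected_space \<tau>" and fin: "\<tau> \<in> finer_than_euclidean"
    and ns: "\<not> separable_space \<tau>"
  shows "\<exists>g::real \<Rightarrow> real. inj g \<and> range g \<subseteq> {x. openin \<tau> {x}}"
proof -
  let ?A = "{x. openin \<tau> {x}}"
  have "(UNIV::real set) \<lesssim> condpts ?A" by (rule uncountable_lepoll[OF iso_uncountable[OF lc fin ns]])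
  then have "(UNIV::real set) \<lesssim> condpts ?A - (condpts ?A - ?A)"
    by (rule lepoll_diff_countable) (rule condpts_iso[OF lc fin])
  also have "\<dots> \<lesssim> ?A" by (rule subset_imp_lepoll) blast
  finally show ?thesis unfolding lepoll_def by blast
qed

lemma nondisc_interval:
  assumes lc: "locally_connected_space \<tau>" and fin: "\<tau> \<in> finer_than_euclidean"
    and nd: "\<tau> \<noteq> discrete_topology UNIV"
  shows "\<exists>a b x. a < b \<and> {a<..<b} \<subseteq> ccomp \<tau> x"
proof -
  obtain x where x: "\<not> openin \<tau> {x}"
    using nd discrete_topology_unique[of UNIV \<tau>] fin_top[OF fin] by auto
  obtain c where c: "c \<in> ccomp \<tau> x" "c \<noteq> x" using comp_noniso[OF lc fin x] by blast
  have xC: "x \<in> ccomp \<tau> x" by (rule comp_self[OF fin])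
  have "{min x c<..<max x c} \<subseteq> ccomp \<tau> x"
  proof
    fix z assume z: "z \<in> {min x c<..<max x c}"
    show "z \<in> ccomp \<tau> x"
    proof (cases "x < c")
      case True then show ?thesis using comp_between[OF fin xC c(1), of z] z by simp
    next
      case False then show ?thesis using comp_between[OF fin c(1) xC, of z] z by simp
    qed
  qed
  moreover have "min x c < max x c" using c(2) by (simp add: min_def max_def)
  ultimately show ?thesis by blast
qed


lemma sing_hom:
  assumes "a \<in> topspace X" "f a \<in> topspace Y"
  shows "homeomorphic_map (subtopology X {a}) (subtopology Y {f a}) f"
proof -
  have "homeomorphic_maps (subtopology X {a}) (subtopology Y {f a}) (\<lambda>_. f a) (\<lambda>_. a)"
    unfolding homeomorphic_maps_def using assms by (auto simp: continuous_map_const)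
  then have "homeomorphic_map (subtopology X {a}) (subtopology Y {f a}) (\<lambda>_. f a)"
    using homeomorphic_map_maps by blast
  then show ?thesis by (rule homeomorphic_map_eq) (use assms in auto)
qed

lemma slots:
  fixes a b :: real
  assumes ab: "a < b"
  defines "lo \<equiv> \<lambda>n::nat. a + (b - a) / (real n + 2)"
  defines "hi \<equiv> \<lambda>n::nat. a + (b - a) / (real n + 1)"
  shows "lo n < hi n" "{lo n<..<hi n} \<subseteq> {a<..<b}"
    "n \<noteq> m \<Longrightarrow> {lo n<..<hi n} \<inter> {lo m<..<hi m} = {}"
proof -
  have d: "b - a > 0" using ab by simp
  show "lo n < hi n" unfolding lo_def hi_def using d by (simp add: divide_strict_left_mono)
  have "a < lo n" unfolding lo_def using d by simp
  moreover have "hi n \<le> b"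
  proof -
    have "(b - a) / (real n + 1) \<le> (b - a) / 1" using d by (intro divide_left_mono) auto
    then show ?thesis unfolding hi_def by simp
  qed
  ultimately show "{lo n<..<hi n} \<subseteq> {a<..<b}" by auto
  have key: "hi m \<le> lo n" if "n < m" for n m
  proof -
    have "real n + 2 \<le> real m + 1" using that by simp
    then have "(b - a) / (real m + 1) \<le> (b - a) / (real n + 2)" using d by (intro divide_left_mono) auto
    then show ?thesis unfolding lo_def hi_def by simp
  qed
  assume "n \<noteq> m"
  then consider "n < m" | "m < n" by linarith
  then show "{lo n<..<hi n} \<inter> {lo m<..<hi m} = {}"
  proof cases
    case 1 then show ?thesis using key[OF 1] by auto
  next
    case 2 then show ?thesis using key[OF 2] by auto
  qed
qed

lemma embed_main:
  fixes \<tau>1 \<tau>2 :: "real topology" and I :: "real set" and j :: "real \<Rightarrow> real"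
  assumes fin1: "\<tau>1 \<in> finer_than_euclidean" and fin2: "\<tau>2 \<in> finer_than_euclidean"
    and lc1: "locally_connected_space \<tau>1" and lc2: "locally_connected_space \<tau>2"
    and nd: "\<tau>2 \<noteq> discrete_topology UNIV"
    and I: "I \<subseteq> {x. openin \<tau>1 {x}}"
    and j: "inj_on j I" "j ` I \<subseteq> {x. openin \<tau>2 {x}}"
    and cnt: "countable {ccomp \<tau>1 x | x. x \<notin> I}"
  shows "\<exists>S. \<tau>1 homeomorphic_space subtopology \<tau>2 S"
proof -
  obtain a b x2 where ab: "a < b" "{a<..<b} \<subseteq> ccomp \<tau>2 x2"
    using nondisc_interval[OF lc2 fin2 nd] by blast
  let ?K = "{ccomp \<tau>1 x | x. x \<notin> I}"
  obtain idx :: "real set \<Rightarrow> nat" where idx: "inj_on idx ?K"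
    using cnt unfolding countable_def by blast
  define lo where "lo = (\<lambda>n::nat. a + (b - a) / (real n + 2))"
  define hi where "hi = (\<lambda>n::nat. a + (b - a) / (real n + 1))"
  have lohi: "lo n < hi n" "{lo n<..<hi n} \<subseteq> {a<..<b}"
    "n \<noteq> m \<Longrightarrow> {lo n<..<hi n} \<inter> {lo m<..<hi m} = {}" for n m
    using slots(1)[OF ab(1), of n] slots(2)[OF ab(1), of n] slots(3)[OF ab(1), of n m]
    unfolding lo_def hi_def by auto
  define f where "f x = (if x \<in> I then j x else emb (lo (idx (ccomp \<tau>1 x))) (hi (idx (ccomp \<tau>1 x))) x)" for x
  define Sg where "Sg = (\<lambda>x. {x}) ` I"
  define \<C> where "\<C> = Sg \<union> ?K"
  define D where "D P = (if P \<in> Sg then {j (the_elem P)} else {lo (idx P)<..<hi (idx P)})" for P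
  have noI: "y \<notin> I" if "x \<notin> I" "y \<in> ccomp \<tau>1 x" for x y
  proof
    assume "y \<in> I"
    then have "ccomp \<tau>1 y = {y}" using comp_iso[OF fin1] I by blast
    then have "ccomp \<tau>1 x = {y}" using comp_same[OF that(2)] by simp
    then have "x = y" using comp_self[OF fin1, of x] by simp
    then show False using that \<open>y \<in> I\<close> by simp
  qed
  have KnS: "P \<notin> Sg" if hP: "P \<in> ?K" for P
  proof
    assume "P \<in> Sg"
    then obtain y where y: "y \<in> I" "P = {y}" unfolding Sg_def by blast
    obtain x where x: "x \<notin> I" "P = ccomp \<tau>1 x" using hP by blast
    have "x \<in> P" using x(2) comp_self[OF fin1] by simp
    then have "x = y" using y(2) by simp
    then show False using x(1) y(1) by simp
  qed
  have noniso2: "\<not> openin \<tau>2 {z}" if "z \<in> {a<..<b}" for z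
  proof
    assume "openin \<tau>2 {z}"
    then have "ccomp \<tau>2 z = {z}" by (rule comp_iso[OF fin2])
    moreover have "ccomp \<tau>2 z = ccomp \<tau>2 x2" using comp_same ab(2) that by blast
    ultimately have "{a<..<b} \<subseteq> {z}" using ab(2) by simp
    moreover have "(a + b) / 2 \<in> {a<..<b}" "(3 * a + b) / 4 \<in> {a<..<b}" using ab(1) by auto
    moreover have "(a + b) / 2 \<noteq> (3 * a + b) / 4" using ab(1) by simp
    ultimately show False by blast
  qed
  have fK: "f y = emb (lo (idx P)) (hi (idx P)) y" if hP: "P \<in> ?K" and hy: "y \<in> P" for P y
  proof -
    obtain x where x: "x \<notin> I" "P = ccomp \<tau>1 x" using hP by blast
    have "y \<notin> I" using noI x hy by blast
    moreover have "ccomp \<tau>1 y = P" using comp_same x(2) hy by blast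
    ultimately show ?thesis unfolding f_def by simp
  qed
  have hom: "homeomorphic_map \<tau>1 (subtopology \<tau>2 (f ` topspace \<tau>1)) f"
  proof (rule glue[where \<C>=\<C> and D=D])
    show "topspace \<tau>1 = \<Union>\<C>"
    proof -
      have "x \<in> \<Union>\<C>" for x
      proof (cases "x \<in> I")
        case True then show ?thesis unfolding \<C>_def Sg_def by blast
      next
        case False
        then have "ccomp \<tau>1 x \<in> \<C>" unfolding \<C>_def by blast
        then show ?thesis using comp_self[OF fin1, of x] by blast
      qed
      then show ?thesis using fin_top[OF fin1] by blast
    qed
    fix P assume P: "P \<in> \<C>"
    show "openin \<tau>1 P"
    proof (cases "P \<in> Sg")
      case True then show ?thesis using I unfolding Sg_def by blast
    next
      case False then have "P \<in> ?K" using P unfolding \<C>_def by blast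
      then show ?thesis using comp_open[OF lc1] by blast
    qed
    show "openin \<tau>2 (D P)"
    proof (cases "P \<in> Sg")
      case True
      then obtain x where "x \<in> I" "P = {x}" unfolding Sg_def by blast
      then show ?thesis unfolding D_def using True j(2) by auto
    next
      case False then show ?thesis unfolding D_def using fin_open[OF fin2] by simp
    qed
    show "f ` P \<subseteq> D P"
    proof (cases "P \<in> Sg")
      case True
      then obtain x where "x \<in> I" "P = {x}" unfolding Sg_def by blast
      then show ?thesis unfolding D_def f_def using True by auto
    next
      case False then have PK: "P \<in> ?K" using P unfolding \<C>_def by blast
      show ?thesis
      proof
        fix y assume "y \<in> f ` P"
        then obtain x where x: "x \<in> P" "y = f x" by blast
        then have "y = emb (lo (idx P)) (hi (idx P)) x" using fK[OF PK] by simp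
        then show "y \<in> D P" unfolding D_def using False emb_range[OF lohi(1)] by simp
      qed
    qed
    show "homeomorphic_map (subtopology \<tau>1 P) (subtopology \<tau>2 (f ` P)) f"
    proof (cases "P \<in> Sg")
      case True
      then obtain x where x: "x \<in> I" "P = {x}" unfolding Sg_def by blast
      then show ?thesis using sing_hom[of x \<tau>1 f \<tau>2] fin_top[OF fin1] fin_top[OF fin2] by simp
    next
      case False then have PK: "P \<in> ?K" using P unfolding \<C>_def by blast
      then obtain x0 where x0: "P = ccomp \<tau>1 x0" by blast
      let ?g = "emb (lo (idx P)) (hi (idx P))"
      have fg: "f ` P = ?g ` P" using fK[OF PK] by simp
      have gsub: "?g ` P \<subseteq> ccomp \<tau>2 x2"
        using emb_range[OF lohi(1)] lohi(2) ab(2) by blast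
      have s1: "subtopology \<tau>1 P = subtopology euclideanreal P"
        using comp_subtop[OF fin1 lc1, of x0] x0 by simp
      have "subtopology \<tau>2 (?g ` P) = subtopology (subtopology \<tau>2 (ccomp \<tau>2 x2)) (?g ` P)"
        using gsub by (simp add: subtopology_subtopology Int_absorb1)
      also have "\<dots> = subtopology (subtopology euclideanreal (ccomp \<tau>2 x2)) (?g ` P)"
        using comp_subtop[OF fin2 lc2, of x2] by simp
      also have "\<dots> = subtopology euclideanreal (?g ` P)"
        using gsub by (simp add: subtopology_subtopology Int_absorb1)
      finally have s2: "subtopology \<tau>2 (?g ` P) = subtopology euclideanreal (?g ` P)" .
      have "homeomorphic_map (subtopology euclideanreal P) (subtopology euclideanreal (?g ` P)) ?g"
        by (rule emb_hom_sub[OF lohi(1)])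
      then have "homeomorphic_map (subtopology euclideanreal P) (subtopology euclideanreal (?g ` P)) f"
        by (rule homeomorphic_map_eq) (use fK[OF PK] in simp)
      then show ?thesis using s1 s2 fg by simp
    qed
  next
    fix P P' assume P: "P \<in> \<C>" and P': "P' \<in> \<C>" and ne: "P \<noteq> P'"
    show "D P \<inter> D P' = {}"
    proof (cases "P \<in> Sg")
      case True
      then obtain x where x: "x \<in> I" "P = {x}" unfolding Sg_def by blast
      show ?thesis
      proof (cases "P' \<in> Sg")
        case True
        then obtain x' where x': "x' \<in> I" "P' = {x'}" unfolding Sg_def by blast
        have "j x \<noteq> j x'" using j(1) x x' ne by (metis inj_onD)
        then show ?thesis unfolding D_def using \<open>P \<in> Sg\<close> True x x' by simp
      next
        case False
        have "D P' \<subseteq> {a<..<b}" using lohi(2)[of "idx P'"] False unfolding D_def by simp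
        then have "\<not> openin \<tau>2 {z}" if "z \<in> D P'" for z
          using that noniso2 by blast
        moreover have "openin \<tau>2 {j x}" using j(2) x(1) by blast
        ultimately show ?thesis unfolding D_def using True x by auto
      qed
    next
      case False
      then have PK: "P \<in> ?K" using P unfolding \<C>_def by blast
      show ?thesis
      proof (cases "P' \<in> Sg")
        case True
        then obtain x where x: "x \<in> I" "P' = {x}" unfolding Sg_def by blast
        have "D P \<subseteq> {a<..<b}" using lohi(2)[of "idx P"] False unfolding D_def by simp
        then have "\<not> openin \<tau>2 {z}" if "z \<in> D P" for z
          using that noniso2 by blast
        moreover have "openin \<tau>2 {j x}" using j(2) x(1) by blast
        ultimately show ?thesis unfolding D_def using True x by auto
      next
        case False
        then have PK': "P' \<in> ?K" using P' unfolding \<C>_def by blast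
        have "idx P \<noteq> idx P'" using idx PK PK' ne by (meson inj_onD)
        then show ?thesis unfolding D_def using \<open>P \<notin> Sg\<close> False lohi(3) by simp
      qed
    qed
  qed
  then show ?thesis using homeomorphic_map_imp_homeomorphic_space by blast
qed


theorem proposition3:
  fixes \<tau>1 \<tau>2 :: "real topology"
  assumes "\<tau>1 \<in> finer_than_euclidean" and "\<tau>2 \<in> finer_than_euclidean"
    and "locally_connected_space \<tau>1" and "locally_connected_space \<tau>2"
  shows "(separable_space \<tau>1 \<and> \<tau>2 \<noteq> discrete_topology UNIV
           \<longrightarrow> (\<exists>S. \<tau>1 homeomorphic_space subtopology \<tau>2 S))
       \<and> (\<not> separable_space \<tau>2 \<and> \<tau>2 \<noteq> discrete_topology UNIV
           \<longrightarrow> (\<exists>S. \<tau>1 homeomorphic_space subtopology \<tau>2 S))"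
proof (intro conjI impI)
  assume h: "separable_space \<tau>1 \<and> \<tau>2 \<noteq> discrete_topology UNIV"
  have c: "countable {ccomp \<tau>1 x | x. x \<notin> {}}"
    using countable_comps_sep[OF assms(3) assms(1)] h by simp
  show "\<exists>S. \<tau>1 homeomorphic_space subtopology \<tau>2 S"
    by (rule embed_main[OF assms(1,2,3,4) _ _ _ _ c, of id]) (use h in auto)
next
  assume h: "\<not> separable_space \<tau>2 \<and> \<tau>2 \<noteq> discrete_topology UNIV"
  obtain g :: "real \<Rightarrow> real" where g: "inj g" "range g \<subseteq> {x. openin \<tau>2 {x}}"
    using iso_inj[OF assms(4) assms(2)] h by blast
  have c: "countable {ccomp \<tau>1 x | x. x \<notin> {x. openin \<tau>1 {x}}}"
    using countable_noniso_comps[OF assms(3) assms(1)] by simp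
  show "\<exists>S. \<tau>1 homeomorphic_space subtopology \<tau>2 S"
  proof (rule embed_main[OF assms(1,2,3,4) _ _ _ _ c])
    show "\<tau>2 \<noteq> discrete_topology UNIV" using h by simp
    show "{x. openin \<tau>1 {x}} \<subseteq> {x. openin \<tau>1 {x}}" by simp
    show "inj_on g {x. openin \<tau>1 {x}}" using g(1) by (rule inj_on_subset) simp
    show "g ` {x. openin \<tau>1 {x}} \<subseteq> {x. openin \<tau>2 {x}}" using g(2) by blast
  qed
qed

end
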